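(* Let $\lambda$ be an infinite cardinal with $\lambda=\lambda^{<\lambda}$. Then $\mathfrak{b}_\lambda\le\mathfrak{b}^7_\lambda$. In other words: if $\mathcal{B},\mathcal{C}\subseteq[\lambda]^\lambda$, $|\mathcal{C}|\le\lambda$, $|\mathcal{B}|<\mathfrak{b}_\lambda$, and $|B\cap C|<\lambda$ for all $B\in\mathcal{B}$, $C\in\mathcal{C}$, then $\mathcal{B}$ and $\mathcal{C}$ are separable.
   Context: For sets $A,B$, $A\subseteq^* B$ means $|A\setminus B|<\lambda$. For families $\mathcal{B},\mathcal{C}$ of subsets of $\lambda$, write $\mathcal{B}\perp\mathcal{C}$ if $|B\cap C|<\lambda$ for all $B\in\mathcal{B}$, $C\in\mathcal{C}$. A set $S$ separates $\mathcal{B}$ and $\mathcal{C}$ if $B\subseteq^* S$ for every $B\in\mathcal{B}$ and $|C\cap S|<\lambda$ for every $C\in\mathcal{C}$; they are separable if such $S$ exists. $\mathfrak{b}^7_\lambda$ is the least cardinality of a family $\mathcal{B}\subseteq[\lambda]^\lambda$ for which there exists $\mathcal{C}\subseteq[\lambda]^\lambda$ with $|\mathcal{C}|=\lambda$, $\mathcal{B}\perp\mathcal{C}$, and $\mathcal{B},\mathcal{C}$ not separable. For $f,g\in{}^\lambda\lambda$, $f\le^* g$ means $|\{\alpha<\lambda: f(\alpha)>g(\alpha)\}|<\lambda$; $B\subseteq{}^\lambda\lambda$ is unbounded if no $h\in{}^\lambda\lambda$ satisfies $f\le^*h$ for all $f\in B$; $\mathfrak{b}_\lambda$ is the least cardinality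 of an unbounded family. *)

theory Defs
  imports Main
begin

unbundle cardinal_syntax

text \<open>The cardinal lambda is represented by a cardinal order r (a well-order that is
  minimal among well-orders of its field); lambda is identified with Field r, whose
  elements are ordered by r (the ordinals below lambda).\<close>

text \<open>lambda^{<lambda}: the set of all functions from some alpha < lambda into lambda,
  where alpha is the initial segment underS r a below a point a of lambda.\<close>
definition funs_below :: "'a rel \<Rightarrow> ('a \<Rightarrow> 'a) set" where
  "funs_below r = (\<Union>a\<in>Field r. Func (underS r a) (Field r))"

definition full_subsets :: "'a rel \<Rightarrow> 'a set set" where
  "full_subsets r = {X. X \<subseteq> Field r \<and> |X| =o r}"

definition separates :: "'a rel \<Rightarrow> 'a set \<Rightarrow> 'a set set \<Rightarrow> 'a set set \<Rightarrow> bool" where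
  "separates r S Bs Cs \<longleftrightarrow> (\<forall>B\<in>Bs. |B - S| <o r) \<and> (\<forall>C\<in>Cs. |C \<inter> S| <o r)"

definition separable :: "'a rel \<Rightarrow> 'a set set \<Rightarrow> 'a set set \<Rightarrow> bool" where
  "separable r Bs Cs \<longleftrightarrow> (\<exists>S. S \<subseteq> Field r \<and> separates r S Bs Cs)"

definition le_star :: "'a rel \<Rightarrow> ('a \<Rightarrow> 'a) \<Rightarrow> ('a \<Rightarrow> 'a) \<Rightarrow> bool" where
  "le_star r f g \<longleftrightarrow> |{x \<in> Field r. (g x, f x) \<in> r \<and> g x \<noteq> f x}| <o r"

definition unbounded :: "'a rel \<Rightarrow> ('a \<Rightarrow> 'a) set \<Rightarrow> bool" where
  "unbounded r F \<longleftrightarrow> F \<subseteq> Func (Field r) (Field r) \<and>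
     \<not> (\<exists>h \<in> Func (Field r) (Field r). \<forall>f\<in>F. le_star r f h)"

end

theory Submission imports Defs begin
lemma small_below:
  assumes r: "Card_order r" and K: "|K| <o r"
  shows "\<exists>a\<in>Field r. |K| \<le>o |underS r a|"
proof -
  have wr: "Well_order r" using r card_order_on_well_order_on by blast
  obtain a where a: "a \<in> Field r" and iso: "|K| =o Restr r (underS r a)"
    using ordLess_iff_ordIso_Restr[OF wr card_of_Well_order] K by blast
  then obtain f where "bij_betw f K (Field (Restr r (underS r a)))"
    unfolding ordIso_def iso_def by (auto simp: Field_card_of)
  hence "inj_on f K" "f ` K \<subseteq> underS r a"
    using Field_Restr_subset unfolding bij_betw_def by fastforce+
  hence "|K| \<le>o |underS r a|" using card_of_ordLeq by blast
  thus ?thesis using a by blast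
qed

lemma konig:
  assumes r: "Card_order r" and inf: "infinite (Field r)" and fb: "|funs_below r| \<le>o r"
  shows "regularCard r"
  unfolding regularCard_def
proof safe
  fix K assume K: "K \<subseteq> Field r" and cof: "cofinal K r"
  have "|K| \<le>o r" using K card_of_Field_ordIso card_of_mono1 r ordLeq_ordIso_trans by blast
  moreover
  {assume Kr: "|K| <o r"
    obtain a where a: "a \<in> Field r" and Ka: "|K| \<le>o |underS r a|"
      using small_below[OF r Kr] by blast
    then obtain j where j: "inj_on j K" "j ` K \<subseteq> underS r a"
      using card_of_ordLeq[of K "underS r a"] by metis
    let ?FF = "Func (underS r a) (Field r)"
    have ne: "Field r \<noteq> {}" using inf by auto
    have "?FF \<subseteq> funs_below r" using a unfolding funs_below_def by blast
    hence "|?FF| \<le>o r" using fb card_of_mono1 ordLeq_transitive by metis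
    hence "|?FF| \<le>o |Field r|" using card_of_Field_ordIso[OF r] ordIso_symmetric ordLeq_ordIso_trans by metis
    hence "\<exists>e. e ` Field r = ?FF"
      using card_of_ordLeq2[of "Func (underS r a) (Field r)" "Field r"] Func_non_emp[OF ne] by blast
    then obtain e where e: "e ` Field r = ?FF" by blast
    define D where "D k = (\<lambda>y. e y (j k)) ` underS r k" for k
    have ex: "\<exists>x. x \<in> Field r \<and> x \<notin> D k" if k: "k \<in> K" for k
    proof (rule ccontr)
      assume "\<not> ?thesis"
      hence "Field r \<subseteq> D k" by blast
      hence "|Field r| \<le>o |D k|" by (rule card_of_mono1)
      moreover have "|D k| \<le>o |underS r k|" unfolding D_def by (rule card_of_image)
      moreover have "|underS r k| <o r" using card_of_underS[OF r] k K by blast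
      ultimately have "|Field r| <o r" using ordLeq_ordLess_trans ordLeq_transitive by metis
      thus False using card_of_Field_ordIso[OF r] not_ordLess_ordIso by metis
    qed
    define g where "g k = (SOME x. x \<in> Field r \<and> x \<notin> D k)" for k
    have g: "g k \<in> Field r" "g k \<notin> D k" if "k \<in> K" for k
      using someI_ex[OF ex[OF that]] unfolding g_def by auto
    obtain x0 where x0: "x0 \<in> Field r" using ne by blast
    define G where "G u = (if u \<in> underS r a then (if u \<in> j ` K then g (inv_into K j u) else x0) else undefined)" for u
    have "G \<in> ?FF" unfolding Func_def G_def using g x0 by (auto simp: inv_into_into)
    then obtain y where y: "y \<in> Field r" "e y = G" using e by (metis imageE)
    then obtain k where k: "k \<in> K" "y \<noteq> k" "(y,k) \<in> r" using cof unfolding cofinal_def by blast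
    hence "y \<in> underS r k" unfolding underS_def by auto
    hence "e y (j k) \<in> D k" unfolding D_def by blast
    moreover have "e y (j k) = g k" using y k j unfolding G_def by auto
    ultimately have False using g(2)[OF k(1)] by simp
  }
  ultimately show "|K| =o r" using ordLeq_iff_ordLess_or_ordIso by blast
qed

lemma bounded_small:
  assumes r: "Card_order r" and inf: "infinite (Field r)" and reg: "regularCard r"
    and X: "X \<subseteq> Field r" "|X| <o r"
  shows "\<exists>k\<in>Field r. \<forall>x\<in>X. x \<noteq> k \<and> (x,k) \<in> r"
proof -
  have wo: "well_order_on (Field r) r" using r card_order_on_well_order_on by blast
  hence tr: "trans r" and an: "antisym r" and tot: "\<And>x y. x \<in> Field r \<Longrightarrow> y \<in> Field r \<Longrightarrow> x \<noteq> y \<Longrightarrow> (x,y)\<in>r \<or> (y,x)\<in>r"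
    unfolding well_order_on_def linear_order_on_def partial_order_on_def preorder_on_def total_on_def
    by auto
  have "\<not> |X| =o r" using X(2) not_ordLess_ordIso by blast
  hence "\<not> cofinal X r" using reg X(1) unfolding regularCard_def by blast
  then obtain k0 where k0: "k0 \<in> Field r" "\<forall>x\<in>X. \<not> (k0 \<noteq> x \<and> (k0,x) \<in> r)"
    unfolding cofinal_def by blast
  obtain k where k: "k \<in> Field r" "k0 \<noteq> k" "(k0,k) \<in> r"
    using infinite_Card_order_limit[OF r inf k0(1)] by blast
  have "x \<noteq> k \<and> (x,k) \<in> r" if x: "x \<in> X" for x
  proof (cases "x = k0")
    case True thus ?thesis using k by simp
  next
    case False
    hence xk0: "(x,k0) \<in> r" using tot[of x k0] k0 x X(1) by (metis subsetD)
    hence "(x,k) \<in> r" using tr k(3) unfolding trans_def by blast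
    moreover have "x \<noteq> k" using xk0 k an unfolding antisym_def by blast
    ultimately show ?thesis by simp
  qed
  thus ?thesis using k(1) by blast
qed

theorem mainTheorem10:
  fixes r :: "'a rel" and Bs Cs :: "'a set set"
  assumes "Card_order r" and "infinite (Field r)"
    and "|funs_below r| =o r"
    and "Bs \<subseteq> full_subsets r" and "Cs \<subseteq> full_subsets r"
    and "|Cs| \<le>o r"
    and "\<forall>F. unbounded r F \<longrightarrow> |Bs| <o |F|"
    and "\<forall>B\<in>Bs. \<forall>C\<in>Cs. |B \<inter> C| <o r"
  shows "separable r Bs Cs"
proof -
  note r = assms(1) and inf = assms(2)
  have reg: "regularCard r" using konig[OF r inf] assms(3) ordIso_iff_ordLeq by blast
  have st: "stable r" using regularCard_stable[OF r inf reg] .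
  have wo: "well_order_on (Field r) r" using r card_order_on_well_order_on by blast
  hence tr: "trans r" and an: "antisym r" and tot: "\<And>x y. x \<in> Field r \<Longrightarrow> y \<in> Field r \<Longrightarrow> x \<noteq> y \<Longrightarrow> (x,y)\<in>r \<or> (y,x)\<in>r"
    unfolding well_order_on_def linear_order_on_def partial_order_on_def preorder_on_def total_on_def
    by auto
  have rf: "\<And>x. x \<in> Field r \<Longrightarrow> (x,x) \<in> r" using wo
    unfolding well_order_on_def linear_order_on_def partial_order_on_def preorder_on_def refl_on_def
    by auto
  obtain a0 where a0: "a0 \<in> Field r" using inf by (metis finite.emptyI ex_in_conv)
  have emp: "|{}| <o r" using card_of_empty card_of_underS[OF r a0] ordLeq_ordLess_trans by blast
  have BF: "B \<subseteq> Field r" if "B \<in> Bs" for B using that assms(4) unfolding full_subsets_def by blast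
  obtain c where c: "Cs \<subseteq> c ` Field r" "\<And>a. c a \<in> Cs \<or> c a = {}"
  proof (cases "Cs = {}")
    case True thus ?thesis using that[of "\<lambda>_. {}"] by auto
  next
    case False
    have "|Cs| \<le>o |Field r|" using assms(6) card_of_Field_ordIso[OF r] ordIso_symmetric ordLeq_ordIso_trans by metis
    hence "\<exists>g. g ` Field r = Cs" using card_of_ordLeq2[of Cs "Field r"] False by blast
    then obtain g where "g ` Field r = Cs" by blast
    thus ?thesis using that[of "\<lambda>a. if a \<in> Field r then g a else {}"] by auto
  qed
  have small: "|B \<inter> c a| <o r" if "B \<in> Bs" for B a
    using c(2)[of a] assms(8) that emp by auto
  define f where "f B a = (if a \<in> Field r then (SOME k. k \<in> Field r \<and> (\<forall>x\<in>B \<inter> c a. x \<noteq> k \<and> (x,k) \<in> r)) else undefined)" for B a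
  have f: "f B a \<in> Field r \<and> (\<forall>x\<in>B \<inter> c a. x \<noteq> f B a \<and> (x,f B a) \<in> r)" if "B \<in> Bs" "a \<in> Field r" for B a
  proof -
    have "\<exists>k. k \<in> Field r \<and> (\<forall>x\<in>B \<inter> c a. x \<noteq> k \<and> (x,k) \<in> r)"
      using bounded_small[OF r inf reg, of "B \<inter> c a"] small[OF that(1)] BF[OF that(1)] by blast
    from someI_ex[OF this] show ?thesis unfolding f_def using that(2) by simp
  qed
  have FF: "f ` Bs \<subseteq> Func (Field r) (Field r)" unfolding Func_def using f by (auto simp: f_def)
  have "\<not> unbounded r (f ` Bs)"
  proof
    assume "unbounded r (f ` Bs)"
    hence "|Bs| <o |f ` Bs|" using assms(7) by blast
    moreover have "|f ` Bs| \<le>o |Bs|" by (rule card_of_image)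
    ultimately show False using ordLess_ordLeq_trans ordLess_irreflexive by blast
  qed
  then obtain h where h: "h \<in> Func (Field r) (Field r)" "\<And>B. B \<in> Bs \<Longrightarrow> le_star r (f B) h"
    using FF unfolding unbounded_def by blast
  have hF: "h a \<in> Field r" if "a \<in> Field r" for a using h(1) that unfolding Func_def by blast
  define S where "S = Field r - (\<Union>a\<in>Field r. c a - underS r (h a))"
  have "separates r S Bs Cs"
    unfolding separates_def
  proof safe
    fix C assume C: "C \<in> Cs"
    then obtain a where a: "a \<in> Field r" "C = c a" using c(1) by blast
    have "C \<inter> S \<subseteq> underS r (h a)" using a unfolding S_def by blast
    hence "|C \<inter> S| \<le>o |underS r (h a)|" by (rule card_of_mono1)
    thus "|C \<inter> S| <o r" using card_of_underS[OF r hF[OF a(1)]] ordLeq_ordLess_trans by blast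
  next
    fix B assume B: "B \<in> Bs"
    define E where "E = {a \<in> Field r. (h a, f B a) \<in> r \<and> h a \<noteq> f B a}"
    have E: "|E| <o r" using h(2)[OF B] unfolding le_star_def E_def .
    have "B - S \<subseteq> (\<Union>a\<in>E. B \<inter> c a)"
    proof
      fix x assume x: "x \<in> B - S"
      then obtain a where a: "a \<in> Field r" "x \<in> c a" "x \<notin> underS r (h a)"
        using BF[OF B] unfolding S_def by blast
      have fx: "x \<noteq> f B a" "(x, f B a) \<in> r" "f B a \<in> Field r" using f[OF B a(1)] x a by auto
      have "a \<in> E"
      proof (rule ccontr)
        assume "a \<notin> E"
        hence fh: "(f B a, h a) \<in> r" using tot[OF hF[OF a(1)] fx(3)] a(1) rf[OF hF[OF a(1)]]
          unfolding E_def by (cases "f B a = h a") auto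
        hence "(x, h a) \<in> r" using fx tr unfolding trans_def by blast
        moreover have "x \<noteq> h a" using fh fx an unfolding antisym_def by blast
        ultimately show False using a(3) unfolding underS_def by blast
      qed
      thus "x \<in> (\<Union>a\<in>E. B \<inter> c a)" using x a by blast
    qed
    hence "|B - S| \<le>o |\<Union>a\<in>E. B \<inter> c a|" by (rule card_of_mono1)
    moreover have "|\<Union>a\<in>E. B \<inter> c a| <o r" by (rule stable_UNION[OF st E], rule small[OF B])
    ultimately show "|B - S| <o r" using ordLeq_ordLess_trans by blast
  qed
  moreover have "S \<subseteq> Field r" unfolding S_def by blast
  ultimately show ?thesis unfolding separable_def by blast
qed

end
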